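(* For all positive semidefinite $n\times n$ matrices $A$ and $B$ and every $i=1,\dots,n$, $$\lambda_i\big(\min(A,1)\min(B,1)\big)\le \min(\lambda_i(AB),1).$$
   Context: For a positive semidefinite matrix $A$, $\min(A,1)$ denotes the matrix obtained by functional calculus from the function $x\mapsto\min(x,1)$, i.e. every eigenvalue of $A$ larger than $1$ is replaced by $1$ in a spectral decomposition. For a matrix $X$ with real nonnegative spectrum, $\lambda_1(X)\ge\dots\ge\lambda_n(X)$ denote its eigenvalues sorted non-increasingly. *)

theory Defs
  imports "Jordan_Normal_Form.Schur_Decomposition" "HOL-Library.Multiset"
begin

definition hermitian_mat :: "complex mat \<Rightarrow> bool" where
  "hermitian_mat A \<longleftrightarrow> dim_row A = dim_col A \<and> mat_adjoint A = A"

definition psd_mat :: "nat \<Rightarrow> complex mat \<Rightarrow> bool" where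
  "psd_mat n A \<longleftrightarrow> A \<in> carrier_mat n n \<and> hermitian_mat A \<and>
     (\<forall>v \<in> carrier_vec n. (conjugate v \<bullet> (A *\<^sub>v v)) \<in> \<real> \<and>
                           Re (conjugate v \<bullet> (A *\<^sub>v v)) \<ge> 0)"

definition unitary_mat :: "nat \<Rightarrow> complex mat \<Rightarrow> bool" where
  "unitary_mat n U \<longleftrightarrow> U \<in> carrier_mat n n \<and> U * mat_adjoint U = 1\<^sub>m n
                         \<and> mat_adjoint U * U = 1\<^sub>m n"

definition diag_min1 :: "complex mat \<Rightarrow> complex mat" where
  "diag_min1 D = mat (dim_row D) (dim_col D)
      (\<lambda>(i,j). if i = j then complex_of_real (min (Re (D $$ (i,i))) 1) else 0)"

(* functional calculus min(A,1) via a spectral decomposition A = U D U^* *)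
definition mat_min1 :: "complex mat \<Rightarrow> complex mat" where
  "mat_min1 A = (SOME M. \<exists>U D. unitary_mat (dim_row A) U \<and>
      D \<in> carrier_mat (dim_row A) (dim_row A) \<and> diagonal_mat D \<and>
      (\<forall>i < dim_row A. D $$ (i,i) \<in> \<real>) \<and>
      A = U * D * mat_adjoint U \<and> M = U * diag_min1 D * mat_adjoint U)"

(* eigenvalues (with algebraic multiplicity), real parts, sorted non-increasingly *)
definition eig_list :: "complex mat \<Rightarrow> real list" where
  "eig_list X = rev (sorted_list_of_multiset (image_mset Re (proots (char_poly X))))"

(* lambda_i(X) for i = 1..n *)
definition eig :: "complex mat \<Rightarrow> nat \<Rightarrow> real" where
  "eig X i = eig_list X ! (i - 1)"

end

theory Submission
  imports Defs
begin



lemma adj_def': "mat_adjoint (A::complex mat) = mat (dim_col A) (dim_row A) (\<lambda>(i,j). cnj (A $$ (j,i)))"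
  unfolding mat_adjoint_def mat_of_rows_def
  by (rule eq_matI, simp_all add: cols_nth)

lemma adj_dim[simp]: "dim_row (mat_adjoint (A::complex mat)) = dim_col A" "dim_col (mat_adjoint (A::complex mat)) = dim_row A"
  by (simp_all add: adj_def')

lemma adj_index[simp]: "i < dim_col A \<Longrightarrow> j < dim_row A \<Longrightarrow> mat_adjoint (A::complex mat) $$ (i,j) = cnj (A $$ (j,i))"
  by (simp add: adj_def')

lemma adj_carrier[simp]: "(A::complex mat) \<in> carrier_mat n m \<Longrightarrow> mat_adjoint A \<in> carrier_mat m n"
  unfolding carrier_mat_def by simp

lemma adj_adj[simp]: "mat_adjoint (mat_adjoint A) = (A :: complex mat)"
  by (rule eq_matI, simp_all)

lemma adj_one[simp]: "mat_adjoint (1\<^sub>m n) = (1\<^sub>m n :: complex mat)"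
  by (rule eq_matI, simp_all)

lemma adj_mult: fixes A :: "complex mat" assumes "A \<in> carrier_mat n k" "B \<in> carrier_mat k m"
  shows "mat_adjoint (A * B) = mat_adjoint B * mat_adjoint A"
proof (rule eq_matI)
  fix i j assume ij: "i < dim_row (mat_adjoint B * mat_adjoint A)" "j < dim_col (mat_adjoint B * mat_adjoint A)"
  hence i: "i < m" and j: "j < n" using assms by auto
  show "mat_adjoint (A * B) $$ (i, j) = (mat_adjoint B * mat_adjoint A) $$ (i, j)"
    using i j assms by (simp add: scalar_prod_def cnj_sum mult.commute)
qed (insert assms, simp_all)

lemma adj_add: fixes A :: "complex mat" assumes "A \<in> carrier_mat n m" "B \<in> carrier_mat n m"
  shows "mat_adjoint (A + B) = mat_adjoint A + mat_adjoint B"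
  by (rule eq_matI, insert assms, simp_all)

lemma inner_adj: fixes A :: "complex mat" assumes "A \<in> carrier_mat n m" "u \<in> carrier_vec n" "w \<in> carrier_vec m"
  shows "conjugate u \<bullet> (A *\<^sub>v w) = conjugate (mat_adjoint A *\<^sub>v u) \<bullet> w"
proof -
  have "conjugate u \<bullet> (A *\<^sub>v w) = (\<Sum>i<n. cnj (u $ i) * (\<Sum>j<m. A $$ (i,j) * w $ j))"
    using assms by (simp add: scalar_prod_def mult_mat_vec_def lessThan_atLeast0)
  also have "\<dots> = (\<Sum>i<n. \<Sum>j<m. cnj (u $ i) * A $$ (i,j) * w $ j)"
    by (simp add: sum_distrib_left mult.assoc)
  also have "\<dots> = (\<Sum>j<m. \<Sum>i<n. cnj (u $ i) * A $$ (i,j) * w $ j)"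
    by (rule sum.swap)
  also have "\<dots> = (\<Sum>j<m. cnj (\<Sum>i<n. cnj (A $$ (i,j)) * u $ i) * w $ j)"
    by (simp add: sum_distrib_left mult_ac)
  also have "\<dots> = conjugate (mat_adjoint A *\<^sub>v u) \<bullet> w"
    using assms by (simp add: scalar_prod_def mult_mat_vec_def lessThan_atLeast0)
  finally show ?thesis .
qed

definition qf :: "complex mat \<Rightarrow> complex vec \<Rightarrow> complex" where
  "qf H v = conjugate v \<bullet> (H *\<^sub>v v)"

lemma qf_congr: assumes "M \<in> carrier_mat m n" "X \<in> carrier_mat m m" "v \<in> carrier_vec n"
  shows "qf (mat_adjoint M * X * M) v = qf X (M *\<^sub>v v)"
proof -
  have aM: "mat_adjoint M \<in> carrier_mat n m" using assms by simp
  have "(mat_adjoint M * X * M) *\<^sub>v v = (mat_adjoint M * X) *\<^sub>v (M *\<^sub>v v)"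
    using assms aM by (intro assoc_mult_mat_vec[of _ n m]) auto
  also have "\<dots> = mat_adjoint M *\<^sub>v (X *\<^sub>v (M *\<^sub>v v))"
    using assms aM by (intro assoc_mult_mat_vec[of _ n m _ m]) auto
  finally have "(mat_adjoint M * X * M) *\<^sub>v v = mat_adjoint M *\<^sub>v (X *\<^sub>v (M *\<^sub>v v))" .
  then show ?thesis unfolding qf_def using assms
    by (simp add: inner_adj[of "mat_adjoint M" n m])
qed




lemma char_poly_swap: fixes X Y :: "complex mat"
  assumes X: "X \<in> carrier_mat n n" and Y: "Y \<in> carrier_mat n n"
  shows "char_poly (X * Y) = char_poly (Y * X)"
proof -
  define x :: "complex poly" where "x = [:0,1:]"
  define P where "P = (\<lambda>Z :: complex mat. map_mat (\<lambda>a. [:a:]) Z)"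
  define N where "N = (\<lambda>Z :: complex mat. map_mat (\<lambda>a. [:a:] * [:-1:]) Z)"
  have PX: "P X \<in> carrier_mat n n" and PY: "P Y \<in> carrier_mat n n"
    and NX: "N X \<in> carrier_mat n n" and NY: "N Y \<in> carrier_mat n n"
    using X Y by (auto simp: P_def N_def)
  have I: "1\<^sub>m n \<in> carrier_mat n n" and xI: "x \<cdot>\<^sub>m 1\<^sub>m n \<in> carrier_mat n n" by auto
  have Z: "(0\<^sub>m n n :: complex poly mat) \<in> carrier_mat n n" by auto
  have cpm: "char_poly_matrix (Z1 * Z2) = x \<cdot>\<^sub>m 1\<^sub>m n + N Z1 * P Z2"
    if "Z1 \<in> carrier_mat n n" "Z2 \<in> carrier_mat n n" for Z1 Z2
  proof -
    have "map_mat (\<lambda>a. [:- a:]) (Z1 * Z2) = N (Z1 * Z2)"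
      unfolding N_def by (rule eq_matI, auto)
    also have "\<dots> = N Z1 * P Z2" unfolding N_def P_def
      by (rule map_poly_mult(2)[OF that])
    finally show ?thesis unfolding char_poly_matrix_def x_def using that by simp
  qed
  have cpm2: "char_poly_matrix (Z1 * Z2) = x \<cdot>\<^sub>m 1\<^sub>m n + P Z1 * N Z2"
    if "Z1 \<in> carrier_mat n n" "Z2 \<in> carrier_mat n n" for Z1 Z2
  proof -
    have "map_mat (\<lambda>a. [:- a:]) (Z1 * Z2) = N (Z1 * Z2)"
      unfolding N_def by (rule eq_matI, auto)
    also have "\<dots> = P Z1 * N Z2" unfolding N_def P_def
      by (rule map_poly_mult(3)[OF that])
    finally show ?thesis unfolding char_poly_matrix_def x_def using that by simp
  qed
  have PN: "P Z + N Z = 0\<^sub>m n n" if "Z \<in> carrier_mat n n" for Z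
    unfolding P_def N_def by (rule eq_matI, insert that, auto)
  have NP: "N Z + P Z = 0\<^sub>m n n" if "Z \<in> carrier_mat n n" for Z
    unfolding P_def N_def by (rule eq_matI, insert that, auto)
  define M where "M = four_block_mat (x \<cdot>\<^sub>m 1\<^sub>m n) (P X) (P Y) (1\<^sub>m n)"
  define L1 where "L1 = four_block_mat (1\<^sub>m n) (N X) (0\<^sub>m n n) (1\<^sub>m n)"
  define L2 where "L2 = four_block_mat (1\<^sub>m n) (0\<^sub>m n n) (N Y) (x \<cdot>\<^sub>m 1\<^sub>m n)"
  have M: "M \<in> carrier_mat (n+n) (n+n)" unfolding M_def using xI PX PY I by auto
  have L1: "L1 \<in> carrier_mat (n+n) (n+n)" unfolding L1_def using I by auto
  have L2: "L2 \<in> carrier_mat (n+n) (n+n)" unfolding L2_def using I xI by auto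
  have "L1 * M = four_block_mat (1\<^sub>m n * (x \<cdot>\<^sub>m 1\<^sub>m n) + N X * P Y) (1\<^sub>m n * P X + N X * 1\<^sub>m n)
       (0\<^sub>m n n * (x \<cdot>\<^sub>m 1\<^sub>m n) + 1\<^sub>m n * P Y) (0\<^sub>m n n * P X + 1\<^sub>m n * 1\<^sub>m n)"
    unfolding L1_def M_def by (rule mult_four_block_mat[OF I NX Z I xI PX PY I])
  also have "\<dots> = four_block_mat (char_poly_matrix (X * Y)) (0\<^sub>m n n) (P Y) (1\<^sub>m n)"
  proof (rule cong_four_block_mat)
    show "1\<^sub>m n * (x \<cdot>\<^sub>m 1\<^sub>m n) + N X * P Y = char_poly_matrix (X * Y)"
      using cpm[OF X Y] xI by simp
    show "1\<^sub>m n * P X + N X * 1\<^sub>m n = 0\<^sub>m n n" using PN[OF X] PX NX by simp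
    show "0\<^sub>m n n * (x \<cdot>\<^sub>m 1\<^sub>m n) + 1\<^sub>m n * P Y = P Y" using PY by simp
    show "0\<^sub>m n n * P X + 1\<^sub>m n * 1\<^sub>m n = (1\<^sub>m n :: complex poly mat)" using PX by simp
  qed
  finally have L1M: "L1 * M = four_block_mat (char_poly_matrix (X * Y)) (0\<^sub>m n n) (P Y) (1\<^sub>m n)" .
  have "L2 * M = four_block_mat (1\<^sub>m n * (x \<cdot>\<^sub>m 1\<^sub>m n) + 0\<^sub>m n n * P Y) (1\<^sub>m n * P X + 0\<^sub>m n n * 1\<^sub>m n)
       (N Y * (x \<cdot>\<^sub>m 1\<^sub>m n) + (x \<cdot>\<^sub>m 1\<^sub>m n) * P Y) (N Y * P X + (x \<cdot>\<^sub>m 1\<^sub>m n) * 1\<^sub>m n)"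
    unfolding L2_def M_def by (rule mult_four_block_mat[OF I Z NY xI xI PX PY I])
  also have "\<dots> = four_block_mat (x \<cdot>\<^sub>m 1\<^sub>m n) (P X) (0\<^sub>m n n) (char_poly_matrix (Y * X))"
  proof (rule cong_four_block_mat)
    show "1\<^sub>m n * (x \<cdot>\<^sub>m 1\<^sub>m n) + 0\<^sub>m n n * P Y = x \<cdot>\<^sub>m 1\<^sub>m n" using xI PY by simp
    show "1\<^sub>m n * P X + 0\<^sub>m n n * 1\<^sub>m n = P X" using PX by simp
    have "N Y * (x \<cdot>\<^sub>m 1\<^sub>m n) = x \<cdot>\<^sub>m N Y" using NY by (simp add: mult_smult_distrib[OF NY I])
    moreover have "(x \<cdot>\<^sub>m 1\<^sub>m n) * P Y = x \<cdot>\<^sub>m P Y" using PY by (simp add: mult_smult_assoc_mat[OF I PY])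
    ultimately show "N Y * (x \<cdot>\<^sub>m 1\<^sub>m n) + (x \<cdot>\<^sub>m 1\<^sub>m n) * P Y = 0\<^sub>m n n"
      using NY PY NP[OF Y] by (simp add: add_smult_distrib_left_mat[symmetric])
    show "N Y * P X + (x \<cdot>\<^sub>m 1\<^sub>m n) * 1\<^sub>m n = char_poly_matrix (Y * X)"
      using cpm[OF Y X] xI NY PX by (simp add: comm_add_mat[of _ n n])
  qed
  finally have L2M: "L2 * M = four_block_mat (x \<cdot>\<^sub>m 1\<^sub>m n) (P X) (0\<^sub>m n n) (char_poly_matrix (Y * X))" .
  have dL1: "det L1 = 1" unfolding L1_def
    by (subst det_four_block_mat_lower_left_zero[OF I NX refl I], simp)
  have dL2: "det L2 = x ^ n" unfolding L2_def
    by (subst det_four_block_mat_upper_right_zero[OF I refl NY xI], simp)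
  have XY: "X * Y \<in> carrier_mat n n" and YX: "Y * X \<in> carrier_mat n n" using X Y by auto
  have "det (L1 * M) = char_poly (X * Y)" unfolding L1M char_poly_def
    by (subst det_four_block_mat_upper_right_zero[OF char_poly_matrix_closed[OF XY] refl PY I], simp)
  hence dM: "det M = char_poly (X * Y)" using det_mult[OF L1 M] dL1 by simp
  have "det (L2 * M) = x ^ n * char_poly (Y * X)" unfolding L2M char_poly_def
    by (subst det_four_block_mat_lower_left_zero[OF xI PX refl char_poly_matrix_closed[OF YX]], simp)
  hence eq: "x ^ n * char_poly (X * Y) = x ^ n * char_poly (Y * X)" using det_mult[OF L2 M] dL2 dM by simp
  have nz: "x ^ n \<noteq> 0" unfolding x_def by simp
  show ?thesis by (rule mult_left_cancel[OF nz, THEN iffD1, OF eq])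
qed




lemma cself: fixes w :: "complex vec" assumes "w \<in> carrier_vec n"
  shows "w \<bullet>c w = of_real (\<Sum>k<n. (cmod (w $ k))\<^sup>2)"
proof -
  have "w \<bullet>c w = (\<Sum>k<n. w $ k * cnj (w $ k))"
    using assms unfolding scalar_prod_def by (simp add: lessThan_atLeast0)
  also have "\<dots> = (\<Sum>k<n. of_real ((cmod (w $ k))\<^sup>2))" by (simp only: complex_norm_square)
  also have "\<dots> = of_real (\<Sum>k<n. (cmod (w $ k))\<^sup>2)" by simp
  finally show ?thesis .
qed

lemma unitary_first_col: fixes v :: "complex vec"
  assumes v: "v \<in> carrier_vec n" and v0: "v \<noteq> 0\<^sub>v n"
  shows "\<exists>U c. unitary_mat n U \<and> c \<noteq> 0 \<and> col U 0 = c \<cdot>\<^sub>v v"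
proof -
  interpret cof_vec_space n "TYPE(complex)" .
  define b where "b = basis_completion v"
  define ws where "ws = gram_schmidt n b"
  from basis_completion[OF v v0, folded b_def]
  have dist_b: "distinct b" and indep: "\<not> lin_dep (set b)" and b: "set b \<subseteq> carrier_vec n"
    and hdb: "hd b = v" and len_b: "length b = n" by auto
  have n: "n > 0" using v v0 by (cases n, auto)
  from hdb len_b n obtain vs where bv: "b = v # vs" by (cases b, auto)
  from gram_schmidt_result[OF b dist_b indep refl, folded ws_def]
  have ws: "set ws \<subseteq> carrier_vec n" "corthogonal ws" "length ws = n"
    by (auto simp: len_b)
  from gram_schmidt_hd[OF v, of vs, folded bv] have hdws: "hd ws = v" unfolding ws_def .
  have ws0: "ws ! 0 = v" using hdws ws(3) n by (cases ws, auto)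
  define nr where "nr = (\<lambda>j. sqrt (\<Sum>k<n. (cmod (ws ! j $ k))\<^sup>2))"
  have wsc: "ws ! j \<in> carrier_vec n" if "j < n" for j using ws that by auto
  have self: "ws ! j \<bullet>c ws ! j = of_real ((nr j)\<^sup>2)" if "j < n" for j
    unfolding nr_def using cself[OF wsc[OF that]] by (simp add: sum_nonneg)
  have nz: "ws ! j \<bullet>c ws ! j \<noteq> 0" if "j < n" for j
    using corthogonalD[OF ws(2), of j j] ws(3) that by auto
  have nrnz: "nr j \<noteq> 0" if "j < n" for j using self[OF that] nz[OF that] by auto
  define U where "U = mat n n (\<lambda>(i,j). ws ! j $ i / of_real (nr j))"
  have U: "U \<in> carrier_mat n n" unfolding U_def by simp
  have "mat_adjoint U * U = 1\<^sub>m n"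
  proof (rule eq_matI)
    fix i j assume "i < dim_row (1\<^sub>m n :: complex mat)" "j < dim_col (1\<^sub>m n :: complex mat)"
    hence i: "i < n" and j: "j < n" by auto
    have "(mat_adjoint U * U) $$ (i,j) = (\<Sum>k<n. cnj (ws ! i $ k / of_real (nr i)) * (ws ! j $ k / of_real (nr j)))"
      using i j U by (simp add: U_def scalar_prod_def lessThan_atLeast0)
    also have "\<dots> = (\<Sum>k<n. ws ! j $ k * cnj (ws ! i $ k)) / (of_real (nr i) * of_real (nr j))"
      by (simp add: sum_divide_distrib mult_ac)
    also have "(\<Sum>k<n. ws ! j $ k * cnj (ws ! i $ k)) = ws ! j \<bullet>c ws ! i"
      using wsc[OF i] by (simp add: scalar_prod_def lessThan_atLeast0)
    finally have eq: "(mat_adjoint U * U) $$ (i,j) = ws ! j \<bullet>c ws ! i / (of_real (nr i) * of_real (nr j))" .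
    show "(mat_adjoint U * U) $$ (i,j) = 1\<^sub>m n $$ (i,j)"
    proof (cases "i = j")
      case True
      thus ?thesis using eq self[OF i] nrnz[OF i] i by (simp add: power2_eq_square)
    next
      case False
      thus ?thesis using eq corthogonalD[OF ws(2), of j i] ws(3) i j by simp
    qed
  qed (insert U, auto)
  moreover hence "U * mat_adjoint U = 1\<^sub>m n" using mat_mult_left_right_inverse[of "mat_adjoint U" n U] U by simp
  moreover have "col U 0 = (1 / of_real (nr 0)) \<cdot>\<^sub>v v"
    by (rule eq_vecI, insert n v, auto simp: U_def ws0)
  moreover have "(1 / complex_of_real (nr 0)) \<noteq> 0" using nrnz[OF n] by simp
  ultimately show ?thesis using U unfolding unitary_mat_def by blast
qed




definition dg :: "nat \<Rightarrow> (nat \<Rightarrow> real) \<Rightarrow> complex mat" where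
  "dg n d = mat n n (\<lambda>(i,j). if i = j then complex_of_real (d i) else 0)"

lemma dg_dim[simp]: "dim_row (dg n d) = n" "dim_col (dg n d) = n" by (simp_all add: dg_def)

lemma dg_carrier[simp]: "dg n d \<in> carrier_mat n n" by (simp add: dg_def)

lemma adj_dg[simp]: "mat_adjoint (dg n d) = dg n d"
  by (rule eq_matI, auto simp: dg_def)

lemma unitaryD: assumes "unitary_mat n U"
  shows "U \<in> carrier_mat n n" "mat_adjoint U \<in> carrier_mat n n" "U * mat_adjoint U = 1\<^sub>m n" "mat_adjoint U * U = 1\<^sub>m n"
  using assms unfolding unitary_mat_def by auto

lemma unitary_cancel: assumes U: "unitary_mat n U" and X: "X \<in> carrier_mat n k"
  shows "U * (mat_adjoint U * X) = X" "mat_adjoint U * (U * X) = X"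
proof -
  note u = unitaryD[OF U]
  have "U * (mat_adjoint U * X) = (U * mat_adjoint U) * X" using assoc_mult_mat[OF u(1) u(2) X] by simp
  thus "U * (mat_adjoint U * X) = X" using u X by simp
  have "mat_adjoint U * (U * X) = (mat_adjoint U * U) * X" using assoc_mult_mat[OF u(2) u(1) X] by simp
  thus "mat_adjoint U * (U * X) = X" using u X by simp
qed

lemma adj_congr_herm: fixes M :: "complex mat" assumes M: "M \<in> carrier_mat m n" and X: "X \<in> carrier_mat m m" and h: "mat_adjoint X = X"
  shows "mat_adjoint (mat_adjoint M * X * M) = mat_adjoint M * X * M"
proof -
  have aM: "mat_adjoint M \<in> carrier_mat n m" using M by simp
  have "mat_adjoint (mat_adjoint M * X * M) = mat_adjoint M * mat_adjoint (mat_adjoint M * X)"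
    using aM X M by (intro adj_mult[of _ n m]) auto
  also have "mat_adjoint (mat_adjoint M * X) = mat_adjoint X * M"
    using adj_mult[OF aM X] by simp
  finally show ?thesis using aM X M h assoc_mult_mat[OF aM X M] by simp
qed

lemma unitary_mult: assumes U: "unitary_mat n U" and V: "unitary_mat n V"
  shows "unitary_mat n (U * V)"
proof -
  note u = unitaryD[OF U] and v = unitaryD[OF V]
  have a: "mat_adjoint (U * V) = mat_adjoint V * mat_adjoint U" using adj_mult u v by blast
  have 1: "U * V * mat_adjoint (U * V) = 1\<^sub>m n"
    unfolding a using u v unitary_cancel[OF V, of "mat_adjoint U" n] unitary_cancel[OF U, of "1\<^sub>m n" n]
      assoc_mult_mat[OF u(1) v(1) mult_carrier_mat[OF v(2) u(2)]] by simp
  have 2: "mat_adjoint (U * V) * (U * V) = 1\<^sub>m n"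
    unfolding a using u v unitary_cancel[OF U, of V n] 
      assoc_mult_mat[OF v(2) u(2) mult_carrier_mat[OF u(1) v(1)]] by simp
  show ?thesis unfolding unitary_mat_def using 1 2 u v by simp
qed

lemma dg_split: "dg (Suc m) d = four_block_mat (dg 1 d) (0\<^sub>m 1 m) (0\<^sub>m m 1) (dg m (\<lambda>i. d (Suc i)))"
  by (rule eq_matI, auto simp: dg_def)

lemma spectral_aux:
  "A \<in> carrier_mat n n \<Longrightarrow> mat_adjoint A = A \<Longrightarrow> \<exists>U d. unitary_mat n U \<and> A = U * dg n d * mat_adjoint U"
proof (induction n arbitrary: A)
  case 0
  have "A = 1\<^sub>m 0 * dg 0 (\<lambda>_. 0) * mat_adjoint (1\<^sub>m 0)"
    by (rule eq_matI, insert 0, auto)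
  moreover have "unitary_mat 0 (1\<^sub>m 0)" unfolding unitary_mat_def by simp
  ultimately show ?case by blast
next
  case (Suc m A)
  let ?n = "Suc m"
  have A: "A \<in> carrier_mat ?n ?n" and hA: "mat_adjoint A = A" using Suc by auto
  obtain as where cp: "char_poly A = (\<Prod>a\<leftarrow>as. [:- a, 1:])" and las: "length as = ?n"
    using char_poly_factorized[OF A] by blast
  then obtain e rest where as: "as = e # rest" by (cases as, auto)
  have "poly (char_poly A) e = 0" unfolding cp as by simp
  hence ev: "eigenvalue A e" using eigenvalue_root_char_poly[OF A] by simp
  define v where "v = find_eigenvector A e"
  have "eigenvector A v e" unfolding v_def by (rule find_eigenvector[OF A ev])
  hence v: "v \<in> carrier_vec ?n" and v0: "v \<noteq> 0\<^sub>v ?n" and Av: "A *\<^sub>v v = e \<cdot>\<^sub>v v"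
    unfolding eigenvector_def using A by auto
  obtain U0 c where U0: "unitary_mat ?n U0" and c0: "c \<noteq> 0" and colU0: "col U0 0 = c \<cdot>\<^sub>v v"
    using unitary_first_col[OF v v0] by blast
  note u0 = unitaryD[OF U0]
  define B where "B = mat_adjoint U0 * A * U0"
  have B: "B \<in> carrier_mat ?n ?n" unfolding B_def using u0 A by auto
  have hB: "mat_adjoint B = B" unfolding B_def
    by (rule adj_congr_herm[OF u0(1) A hA])
  have "col B 0 = (mat_adjoint U0 * A) *\<^sub>v col U0 0"
    unfolding B_def using u0 A by (intro col_mult2[of _ ?n ?n _ ?n]) auto
  also have "\<dots> = (mat_adjoint U0 * A) *\<^sub>v (c \<cdot>\<^sub>v v)" by (simp add: colU0)
  also have "\<dots> = c \<cdot>\<^sub>v ((mat_adjoint U0 * A) *\<^sub>v v)"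
    using u0 A v by (intro mult_mat_vec[of _ ?n ?n]) auto
  also have "(mat_adjoint U0 * A) *\<^sub>v v = mat_adjoint U0 *\<^sub>v (e \<cdot>\<^sub>v v)"
    using assoc_mult_mat_vec[OF u0(2) A v] Av by simp
  also have "\<dots> = e \<cdot>\<^sub>v (mat_adjoint U0 *\<^sub>v v)" using u0 v by (intro mult_mat_vec[of _ ?n ?n]) auto
  also have "c \<cdot>\<^sub>v (e \<cdot>\<^sub>v (mat_adjoint U0 *\<^sub>v v)) = e \<cdot>\<^sub>v (mat_adjoint U0 *\<^sub>v (c \<cdot>\<^sub>v v))"
    using u0 v by (simp add: mult_mat_vec[of _ ?n ?n] smult_smult_assoc mult.commute)
  also have "mat_adjoint U0 *\<^sub>v (c \<cdot>\<^sub>v v) = col (mat_adjoint U0 * U0) 0"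
    unfolding colU0[symmetric] using u0 by (intro col_mult2[of _ ?n ?n _ ?n, symmetric]) auto
  also have "\<dots> = unit_vec ?n 0" using u0 by simp
  finally have colB: "col B 0 = e \<cdot>\<^sub>v unit_vec ?n 0" .
  have Bi0: "B $$ (i, 0) = (if i = 0 then e else 0)" if "i < ?n" for i
    using arg_cong[OF colB, of "\<lambda>w. w $ i"] that B by auto
  have e_real: "cnj e = e" using arg_cong[OF hB, of "\<lambda>M. M $$ (0,0)"] B Bi0[of 0] by simp
  have B0j: "B $$ (0, j) = (if j = 0 then e else 0)" if "j < ?n" for j
    using arg_cong[OF hB, of "\<lambda>M. M $$ (0,j)"] B Bi0[OF that] that by (auto split: if_splits)
  define B3 where "B3 = mat m m (\<lambda>(i,j). B $$ (Suc i, Suc j))"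
  have B3: "B3 \<in> carrier_mat m m" unfolding B3_def by simp
  have hB3: "mat_adjoint B3 = B3"
  proof (rule eq_matI)
    fix i j assume "i < dim_row B3" "j < dim_col B3"
    hence i: "i < m" and j: "j < m" using B3 by auto
    show "mat_adjoint B3 $$ (i, j) = B3 $$ (i, j)"
      using arg_cong[OF hB, of "\<lambda>M. M $$ (Suc i, Suc j)"] B i j by (simp add: B3_def)
  qed (insert B3, auto)
  obtain V d' where V: "unitary_mat m V" and B3V: "B3 = V * dg m d' * mat_adjoint V"
    using Suc.IH[OF B3 hB3] by blast
  note vv = unitaryD[OF V]
  define E where "E = four_block_mat (1\<^sub>m 1) (0\<^sub>m 1 m) (0\<^sub>m m 1) V"
  have E: "E \<in> carrier_mat ?n ?n" unfolding E_def using vv by auto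
  have aE: "mat_adjoint E = four_block_mat (1\<^sub>m 1) (0\<^sub>m 1 m) (0\<^sub>m m 1) (mat_adjoint V)"
    by (rule eq_matI, insert vv, auto simp: E_def)
  have "E * mat_adjoint E = four_block_mat (1\<^sub>m 1 * 1\<^sub>m 1 + 0\<^sub>m 1 m * 0\<^sub>m m 1) (1\<^sub>m 1 * 0\<^sub>m 1 m + 0\<^sub>m 1 m * mat_adjoint V)
     (0\<^sub>m m 1 * 1\<^sub>m 1 + V * 0\<^sub>m m 1) (0\<^sub>m m 1 * 0\<^sub>m 1 m + V * mat_adjoint V)"
    unfolding aE unfolding E_def by (rule mult_four_block_mat, insert vv, auto)
  also have "\<dots> = 1\<^sub>m ?n" using vv by simp
  finally have EE1: "E * mat_adjoint E = 1\<^sub>m ?n" .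
  have "mat_adjoint E * E = four_block_mat (1\<^sub>m 1 * 1\<^sub>m 1 + 0\<^sub>m 1 m * 0\<^sub>m m 1) (1\<^sub>m 1 * 0\<^sub>m 1 m + 0\<^sub>m 1 m * V)
     (0\<^sub>m m 1 * 1\<^sub>m 1 + mat_adjoint V * 0\<^sub>m m 1) (0\<^sub>m m 1 * 0\<^sub>m 1 m + mat_adjoint V * V)"
    unfolding aE unfolding E_def by (rule mult_four_block_mat, insert vv, auto)
  also have "\<dots> = 1\<^sub>m ?n" using vv by simp
  finally have EE2: "mat_adjoint E * E = 1\<^sub>m ?n" .
  have uE: "unitary_mat ?n E" unfolding unitary_mat_def using E EE1 EE2 by simp
  define d where "d = (\<lambda>i. if i = 0 then Re e else d' (i - 1))"
  have D1: "dg 1 d \<in> carrier_mat 1 1" by simp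
  have dd: "(\<lambda>i. d (Suc i)) = d'" by (simp add: d_def)
  have "E * dg ?n d = four_block_mat (1\<^sub>m 1 * dg 1 d + 0\<^sub>m 1 m * 0\<^sub>m m 1) (1\<^sub>m 1 * 0\<^sub>m 1 m + 0\<^sub>m 1 m * dg m d')
     (0\<^sub>m m 1 * dg 1 d + V * 0\<^sub>m m 1) (0\<^sub>m m 1 * 0\<^sub>m 1 m + V * dg m d')"
    unfolding E_def dg_split[of m d] dd by (rule mult_four_block_mat, insert vv, auto)
  also have "\<dots> = four_block_mat (dg 1 d) (0\<^sub>m 1 m) (0\<^sub>m m 1) (V * dg m d')" using vv by simp
  finally have ED: "E * dg ?n d = four_block_mat (dg 1 d) (0\<^sub>m 1 m) (0\<^sub>m m 1) (V * dg m d')" .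
  have "E * dg ?n d * mat_adjoint E = four_block_mat (dg 1 d * 1\<^sub>m 1 + 0\<^sub>m 1 m * 0\<^sub>m m 1) (dg 1 d * 0\<^sub>m 1 m + 0\<^sub>m 1 m * mat_adjoint V)
     (0\<^sub>m m 1 * 1\<^sub>m 1 + V * dg m d' * 0\<^sub>m m 1) (0\<^sub>m m 1 * 0\<^sub>m 1 m + V * dg m d' * mat_adjoint V)"
    unfolding ED aE by (rule mult_four_block_mat, insert vv, auto)
  also have "\<dots> = four_block_mat (dg 1 d) (0\<^sub>m 1 m) (0\<^sub>m m 1) B3"
    using vv B3V left_add_zero_mat[OF mult_carrier_mat[OF mult_carrier_mat[OF vv(1) dg_carrier] vv(2)]] by simp
  also have "\<dots> = B"
  proof (rule eq_matI)
    fix i j assume "i < dim_row B" "j < dim_col B"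
    hence i: "i < ?n" and j: "j < ?n" using B by auto
    show "four_block_mat (dg 1 d) (0\<^sub>m 1 m) (0\<^sub>m m 1) B3 $$ (i, j) = B $$ (i, j)"
    proof (cases "i = 0 \<or> j = 0")
      case True
      have "Im e = 0" using arg_cong[OF e_real, of Im] by simp
      hence ee: "complex_of_real (Re e) = e" by (simp add: complex_eq_iff)
      show ?thesis
      proof (cases "i = 0")
        case i0: True
        show ?thesis
        proof (cases "j = 0")
          case True
          have "B $$ (0,0) = e" using Bi0[of 0] by simp
          thus ?thesis using i0 True ee by (simp add: dg_def d_def B3_def)
        next
          case False
          have "B $$ (0,j) = 0" using B0j[OF j] False by simp
          thus ?thesis using i0 False j by (simp add: B3_def)
        qed
      next
        case False
        hence j0: "j = 0" using True by simp
        have "B $$ (i,0) = 0" using Bi0[OF i] False by simp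
        thus ?thesis using j0 False i by (simp add: B3_def)
      qed
    next
      case False
      then obtain i' j' where "i = Suc i'" "j = Suc j'" by (cases i; cases j; auto)
      thus ?thesis using i j B3 by (simp add: B3_def)
    qed
  qed (insert B B3, simp_all)
  finally have BE: "B = E * dg ?n d * mat_adjoint E" by (rule sym)
  have AU: "A * U0 \<in> carrier_mat ?n ?n" using A u0 by simp
  have "U0 * B = U0 * (mat_adjoint U0 * (A * U0))"
    unfolding B_def using assoc_mult_mat[OF u0(2) A u0(1)] by simp
  also have "\<dots> = A * U0" using unitary_cancel(1)[OF U0 AU] .
  finally have "U0 * B * mat_adjoint U0 = A * U0 * mat_adjoint U0" by simp
  also have "\<dots> = A * (U0 * mat_adjoint U0)" by (rule assoc_mult_mat[OF A u0(1) u0(2)])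
  also have "\<dots> = A" using u0 A by simp
  finally have AB: "A = U0 * B * mat_adjoint U0" by simp
  define D where "D = dg ?n d"
  have D: "D \<in> carrier_mat ?n ?n" unfolding D_def by simp
  have aE: "mat_adjoint E \<in> carrier_mat ?n ?n" using E by simp
  have aUE: "mat_adjoint (U0 * E) = mat_adjoint E * mat_adjoint U0" using adj_mult[OF u0(1) E] .
  have "U0 * B * mat_adjoint U0 = U0 * (E * D * mat_adjoint E) * mat_adjoint U0" unfolding BE D_def ..
  also have "\<dots> = U0 * (E * (D * (mat_adjoint E * mat_adjoint U0)))"
    using assoc_mult_mat[OF u0(1) mult_carrier_mat[OF mult_carrier_mat[OF E D] aE] u0(2)]
      assoc_mult_mat[OF E D aE] assoc_mult_mat[OF E mult_carrier_mat[OF D aE] u0(2)]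
      assoc_mult_mat[OF D aE u0(2)] by simp
  also have "\<dots> = (U0 * E) * D * mat_adjoint (U0 * E)"
    unfolding aUE
    using assoc_mult_mat[OF u0(1) E D] assoc_mult_mat[OF mult_carrier_mat[OF u0(1) E] D mult_carrier_mat[OF aE u0(2)]]
      assoc_mult_mat[OF u0(1) E mult_carrier_mat[OF D mult_carrier_mat[OF aE u0(2)]]] by simp
  finally have "A = (U0 * E) * dg ?n d * mat_adjoint (U0 * E)" using AB unfolding D_def by simp
  thus ?case using unitary_mult[OF U0 uE] by blast
qed




lemma dg_mult_entry: assumes M: "M \<in> carrier_mat n n" and i: "i < n" and j: "j < n"
  shows "(M * dg n e) $$ (i,j) = M $$ (i,j) * of_real (e j)"
proof -
  have "(M * dg n e) $$ (i,j) = (\<Sum>l = 0..<n. M $$ (i,l) * (if l = j then of_real (e l) else 0))"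
    using M i j by (simp add: scalar_prod_def dg_def)
  also have "\<dots> = M $$ (i,j) * of_real (e j)"
    by (simp add: if_distrib[of "\<lambda>x. _ * x"] j cong: if_cong)
  finally show ?thesis .
qed

lemma udu_entry: assumes M: "M \<in> carrier_mat n n" and i: "i < n" and k: "k < n"
  shows "(M * dg n e * mat_adjoint M) $$ (i,k) = (\<Sum>j<n. M $$ (i,j) * of_real (e j) * cnj (M $$ (k,j)))"
proof -
  have "(M * dg n e * mat_adjoint M) $$ (i,k) = (\<Sum>j = 0..<n. (M * dg n e) $$ (i,j) * mat_adjoint M $$ (j,k))"
    using M i k by (simp add: scalar_prod_def)
  also have "\<dots> = (\<Sum>j<n. M $$ (i,j) * of_real (e j) * cnj (M $$ (k,j)))"
    using M i k dg_mult_entry[OF M i] by (auto simp: lessThan_atLeast0 intro!: sum.cong)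
  finally show ?thesis .
qed

lemma sorted_decomp:
  assumes U: "unitary_mat n U"
  shows "\<exists>U' d'. unitary_mat n U' \<and> U * dg n d * mat_adjoint U = U' * dg n d' * mat_adjoint U' \<and>
     (\<forall>i j. i \<le> j \<longrightarrow> j < n \<longrightarrow> d' j \<le> d' i)"
proof -
  note u = unitaryD[OF U]
  define xs where "xs = map d [0..<n]"
  define ys where "ys = rev (sort xs)"
  have "mset ys = mset xs" unfolding ys_def by simp
  then obtain p where p: "p permutes {..<length xs}" and pys: "permute_list p xs = ys"
    using mset_eq_permutation by blast
  have lxs: "length xs = n" unfolding xs_def by simp
  have pn: "p permutes {..<n}" using p lxs by simp
  have pj: "p j < n" if "j < n" for j using permutes_in_image[OF pn, of j] that by simp
  define d' where "d' = (\<lambda>j. d (p j))"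
  have ysj: "ys ! j = d' j" if "j < n" for j
    using permute_list_nth[OF p, of j] pys lxs that pj[OF that] by (simp add: xs_def d'_def)
  have sys: "sorted (rev ys)" unfolding ys_def by simp
  have mono: "d' j \<le> d' i" if "i \<le> j" "j < n" for i j
  proof -
    have ly: "length ys = n" unfolding ys_def using lxs by simp
    have "rev ys ! (n - 1 - j) \<le> rev ys ! (n - 1 - i)"
      using sys that ly by (intro sorted_nth_mono) auto
    thus ?thesis using that ly ysj by (simp add: rev_nth)
  qed
  define U' where "U' = mat n n (\<lambda>(i,j). U $$ (i, p j))"
  have U': "U' \<in> carrier_mat n n" unfolding U'_def by simp
  have "mat_adjoint U' * U' = 1\<^sub>m n"
  proof (rule eq_matI)
    fix i k assume "i < dim_row (1\<^sub>m n :: complex mat)" "k < dim_col (1\<^sub>m n :: complex mat)"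
    hence i: "i < n" and k: "k < n" by auto
    have "(mat_adjoint U' * U') $$ (i,k) = (\<Sum>j = 0..<n. cnj (U $$ (j, p i)) * U $$ (j, p k))"
      using i k by (simp add: U'_def scalar_prod_def)
    also have "\<dots> = (mat_adjoint U * U) $$ (p i, p k)"
      using i k pj u(1) u(2) by (simp add: scalar_prod_def)
    also have "\<dots> = 1\<^sub>m n $$ (p i, p k)" by (simp only: u(4))
    also have "\<dots> = 1\<^sub>m n $$ (i,k)" using pj[OF i] pj[OF k] i k permutes_inj[OF pn]
      by (simp add: inj_eq)
    finally show "(mat_adjoint U' * U') $$ (i,k) = 1\<^sub>m n $$ (i,k)" .
  qed (insert U', auto)
  moreover hence "U' * mat_adjoint U' = 1\<^sub>m n" using mat_mult_left_right_inverse[of "mat_adjoint U'" n U'] U' by simp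
  ultimately have uU': "unitary_mat n U'" unfolding unitary_mat_def using U' by simp
  have "U * dg n d * mat_adjoint U = U' * dg n d' * mat_adjoint U'"
  proof (rule eq_matI)
    fix i k assume "i < dim_row (U' * dg n d' * mat_adjoint U')" "k < dim_col (U' * dg n d' * mat_adjoint U')"
    hence i: "i < n" and k: "k < n" using U' by auto
    have "(U' * dg n d' * mat_adjoint U') $$ (i,k) = (\<Sum>j<n. U' $$ (i,j) * of_real (d' j) * cnj (U' $$ (k,j)))"
      by (rule udu_entry[OF U' i k])
    also have "\<dots> = (\<Sum>j<n. (\<lambda>j. U $$ (i,j) * of_real (d j) * cnj (U $$ (k,j))) (p j))"
      using i k by (intro sum.cong, auto simp: U'_def d'_def pj)
    also have "\<dots> = (\<Sum>j<n. U $$ (i,j) * of_real (d j) * cnj (U $$ (k,j)))"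
      using sum.permute[OF pn, of "\<lambda>j. U $$ (i,j) * of_real (d j) * cnj (U $$ (k,j))"] by (simp add: comp_def)
    also have "\<dots> = (U * dg n d * mat_adjoint U) $$ (i,k)"
      by (rule udu_entry[OF u(1) i k, symmetric])
    finally show "(U * dg n d * mat_adjoint U) $$ (i,k) = (U' * dg n d' * mat_adjoint U') $$ (i,k)" by simp
  qed (insert U' u, auto)
  with uU' mono show ?thesis by blast
qed

lemma proots_lin_prod: "proots (\<Prod>a\<leftarrow>xs. [:- a, 1:]) = mset (xs :: complex list)"
proof -
  have "0 \<notin> set (map (\<lambda>a. [:- a, 1:]) xs)" by auto
  hence "proots (\<Prod>a\<leftarrow>xs. [:- a, 1:]) = sum_list (map proots (map (\<lambda>a. [:- a, 1:]) xs))"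
    using proots_prod_list[of "map (\<lambda>a. [:- a, 1:]) xs"] by simp
  also have "\<dots> = mset xs" by (induction xs, simp_all add: proots_linear_factor)
  finally show ?thesis .
qed

lemma cmod_sq: "(complex_of_real (cmod z))\<^sup>2 = z * cnj z"
  by (metis complex_norm_square of_real_power)

lemma eig_list_udu: assumes U: "unitary_mat n U"
  shows "eig_list (U * dg n d * mat_adjoint U) = rev (sort (map d [0..<n]))"
proof -
  note u = unitaryD[OF U]
  have "similar_mat (U * dg n d * mat_adjoint U) (dg n d)"
    by (rule similar_matI[of _ _ _ _ n], insert u, auto)
  hence "char_poly (U * dg n d * mat_adjoint U) = char_poly (dg n d)" by (rule char_poly_similar)
  also have "\<dots> = (\<Prod>a\<leftarrow>diag_mat (dg n d). [:- a, 1:])"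
    by (rule char_poly_upper_triangular[of _ n], auto simp: upper_triangular_def dg_def)
  also have "diag_mat (dg n d) = map (\<lambda>i. complex_of_real (d i)) [0..<n]"
    by (simp add: diag_mat_def dg_def)
  finally have "char_poly (U * dg n d * mat_adjoint U) = (\<Prod>a\<leftarrow>map (\<lambda>i. complex_of_real (d i)) [0..<n]. [:- a, 1:])" .
  hence "proots (char_poly (U * dg n d * mat_adjoint U)) = mset (map (\<lambda>i. complex_of_real (d i)) [0..<n])"
    by (simp only: proots_lin_prod)
  hence RE: "image_mset Re (proots (char_poly (U * dg n d * mat_adjoint U))) = mset (map d [0..<n])"
    by (simp add: multiset.map_comp comp_def)
  show ?thesis unfolding eig_list_def RE sorted_list_of_multiset_mset by (rule refl)
qed

lemma eig_udu_sorted: assumes U: "unitary_mat n U" and mono: "\<forall>i j. i \<le> j \<longrightarrow> j < n \<longrightarrow> d j \<le> d i"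
  and i: "1 \<le> i" "i \<le> n"
  shows "eig (U * dg n d * mat_adjoint U) i = d (i - 1)"
proof -
  have "sorted (rev (map d [0..<n]))"
    using mono by (auto simp: sorted_iff_nth_mono rev_nth)
  hence "sort (map d [0..<n]) = rev (map d [0..<n])"
    by (intro properties_for_sort) auto
  thus ?thesis unfolding eig_def eig_list_udu[OF U] using i by simp
qed

lemma qf_dg: assumes w: "w \<in> carrier_vec n"
  shows "qf (dg n d) w = of_real (\<Sum>j<n. d j * (cmod (w $ j))\<^sup>2)"
proof -
  have "qf (dg n d) w = (\<Sum>j<n. cnj (w $ j) * (of_real (d j) * w $ j))"
    using w unfolding qf_def
    by (simp add: scalar_prod_def mult_mat_vec_def dg_def lessThan_atLeast0 if_distrib[of "\<lambda>x. x * _"] cong: if_cong)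
  also have "\<dots> = (\<Sum>j<n. of_real (d j * (cmod (w $ j))\<^sup>2))"
    by (intro sum.cong refl, simp add: cmod_sq mult_ac)
  finally show ?thesis by simp
qed




lemma herm_sorted_decomp: assumes "H \<in> carrier_mat n n" "mat_adjoint H = H"
  shows "\<exists>U d. unitary_mat n U \<and> H = U * dg n d * mat_adjoint U \<and> (\<forall>i j. i \<le> j \<longrightarrow> j < n \<longrightarrow> d j \<le> d i)"
proof -
  obtain U0 d0 where U0: "unitary_mat n U0" and H: "H = U0 * dg n d0 * mat_adjoint U0"
    using spectral_aux[OF assms] by blast
  from sorted_decomp[OF U0, of d0] H show ?thesis by metis
qed

lemma dg_one: "dg n (\<lambda>_. 1) = 1\<^sub>m n"
  by (rule eq_matI, auto simp: dg_def)

lemma qf_udu: assumes U: "unitary_mat n U" and v: "v \<in> carrier_vec n"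
  shows "qf (U * dg n d * mat_adjoint U) v = qf (dg n d) (mat_adjoint U *\<^sub>v v)"
proof -
  note u = unitaryD[OF U]
  have "qf (U * dg n d * mat_adjoint U) v = qf (mat_adjoint (mat_adjoint U) * dg n d * mat_adjoint U) v" by simp
  also have "\<dots> = qf (dg n d) (mat_adjoint U *\<^sub>v v)" by (rule qf_congr[OF u(2) dg_carrier v])
  finally show ?thesis .
qed

lemma adjU_U_vec: assumes U: "unitary_mat n U" and a: "a \<in> carrier_vec n"
  shows "mat_adjoint U *\<^sub>v (U *\<^sub>v a) = a"
proof -
  note u = unitaryD[OF U]
  have "mat_adjoint U *\<^sub>v (U *\<^sub>v a) = (mat_adjoint U * U) *\<^sub>v a"
    using assoc_mult_mat_vec[OF u(2) u(1) a] by simp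
  thus ?thesis using u a by simp
qed

lemma nsq_unitary: assumes U: "unitary_mat n U" and a: "a \<in> carrier_vec n"
  shows "(\<Sum>j<n. (cmod ((U *\<^sub>v a) $ j))\<^sup>2) = (\<Sum>j<n. (cmod (a $ j))\<^sup>2)"
proof -
  note u = unitaryD[OF U]
  have Ua: "U *\<^sub>v a \<in> carrier_vec n" using u a by simp
  have "qf (dg n (\<lambda>_. 1)) (U *\<^sub>v a) = qf (mat_adjoint U * dg n (\<lambda>_. 1) * U) a"
    by (rule qf_congr[OF u(1) dg_carrier a, symmetric])
  also have "mat_adjoint U * dg n (\<lambda>_. 1) * U = 1\<^sub>m n" unfolding dg_one using u by simp
  also have "1\<^sub>m n = dg n (\<lambda>_. 1)" by (simp add: dg_one)
  finally have "qf (dg n (\<lambda>_. 1)) (U *\<^sub>v a) = qf (dg n (\<lambda>_. 1)) a" .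
  thus ?thesis unfolding qf_dg[OF Ua] qf_dg[OF a] of_real_eq_iff by simp
qed




lemma kernel_exists:
  fixes U1 U2 :: "complex mat" and i n :: nat
  assumes i: "1 \<le> i" "i \<le> n"
  shows "\<exists>c. c \<in> carrier_vec (Suc n) \<and> c \<noteq> 0\<^sub>v (Suc n) \<and>
    mat (Suc n) (Suc n) (\<lambda>(r,col). if r < n then (if col < i then U1 $$ (r,col) else - U2 $$ (r, col - 1)) else 0) *\<^sub>v c = 0\<^sub>v (Suc n)"
proof -
  define K where "K = mat (Suc n) (Suc n) (\<lambda>(r,col). if r < n then (if col < i then U1 $$ (r,col) else - U2 $$ (r, col - 1)) else 0)"
  have K: "K \<in> carrier_mat (Suc n) (Suc n)" unfolding K_def by simp
  have "K = mat\<^sub>r (Suc n) (Suc n) (\<lambda>r. if r = n then 0\<^sub>v (Suc n) else row K r)"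
    by (rule eq_matI, auto simp: K_def)
  also have "det \<dots> = 0"
    by (rule det_row_0, insert K, auto)
  finally have "det K = 0" .
  thus ?thesis using det_0_iff_vec_prod_zero[OF K] unfolding K_def by blast
qed

lemma sum_if_less: fixes i n :: nat assumes "i \<le> n"
  shows "(\<Sum>j<n. if j < i then g j else (0::complex)) = (\<Sum>j<i. g j)"
proof -
  define h where "h = (\<lambda>j. if j < i then g j else (0::complex))"
  have "sum h {0..<n} = sum h {0..<i} + sum h {i..<n}"
    using sum.atLeastLessThan_concat[of 0 i n h] assms by simp
  also have "sum h {i..<n} = 0" unfolding h_def by (intro sum.neutral, auto)
  also have "sum h {0..<i} = sum g {0..<i}" unfolding h_def by (intro sum.cong, auto)
  finally show ?thesis unfolding h_def by (simp add: lessThan_atLeast0)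
qed

lemma sum_if_ge: assumes "1 \<le> i" "i \<le> n"
  shows "(\<Sum>j<n. if i - 1 \<le> j then g j else (0::complex)) = (\<Sum>col\<in>{i..<Suc n}. g (col - 1))"
proof -
  have "(\<Sum>j<n. if i - 1 \<le> j then g j else 0) = sum g {j \<in> {..<n}. i - 1 \<le> j}"
    by (rule sum.inter_filter[symmetric], simp)
  also have "{j \<in> {..<n}. i - 1 \<le> j} = {i - 1..<n}" using assms by auto
  also have "sum g {i - 1..<n} = (\<Sum>col\<in>{Suc (i - 1)..<Suc n}. g (col - 1))"
    by (simp only: sum.shift_bounds_Suc_ivl, simp)
  also have "Suc (i - 1) = i" using assms by simp
  finally show ?thesis .
qed

lemma weyl_mono:
  fixes H1 H2 :: "complex mat"
  assumes H1: "H1 \<in> carrier_mat n n" "mat_adjoint H1 = H1"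
    and H2: "H2 \<in> carrier_mat n n" "mat_adjoint H2 = H2"
    and le: "\<And>v. v \<in> carrier_vec n \<Longrightarrow> Re (qf H1 v) \<le> Re (qf H2 v)"
    and i: "1 \<le> i" "i \<le> n"
  shows "eig H1 i \<le> eig H2 i"
proof -
  obtain U1 d1 where U1: "unitary_mat n U1" and H1d: "H1 = U1 * dg n d1 * mat_adjoint U1"
    and m1: "\<forall>i j. i \<le> j \<longrightarrow> j < n \<longrightarrow> d1 j \<le> d1 i"
    using herm_sorted_decomp[OF H1] by blast
  obtain U2 d2 where U2: "unitary_mat n U2" and H2d: "H2 = U2 * dg n d2 * mat_adjoint U2"
    and m2: "\<forall>i j. i \<le> j \<longrightarrow> j < n \<longrightarrow> d2 j \<le> d2 i"
    using herm_sorted_decomp[OF H2] by blast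
  note u1 = unitaryD[OF U1] and u2 = unitaryD[OF U2]
  have e1: "eig H1 i = d1 (i - 1)" unfolding H1d by (rule eig_udu_sorted[OF U1 m1 i])
  have e2: "eig H2 i = d2 (i - 1)" unfolding H2d by (rule eig_udu_sorted[OF U2 m2 i])
  show ?thesis
  proof (rule ccontr)
    assume "\<not> ?thesis"
    hence lt: "d2 (i - 1) < d1 (i - 1)" using e1 e2 by simp
    define K where "K = mat (Suc n) (Suc n) (\<lambda>(r,col). if r < n then (if col < i then U1 $$ (r,col) else - U2 $$ (r, col - 1)) else 0)"
    obtain c where c: "c \<in> carrier_vec (Suc n)" and c0: "c \<noteq> 0\<^sub>v (Suc n)" and Kc: "K *\<^sub>v c = 0\<^sub>v (Suc n)"
      using kernel_exists[OF i, of U1 U2] unfolding K_def by blast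
    define a where "a = vec n (\<lambda>j. if j < i then c $ j else 0)"
    define b where "b = vec n (\<lambda>j. if i - 1 \<le> j then c $ (Suc j) else 0)"
    have a: "a \<in> carrier_vec n" and b: "b \<in> carrier_vec n" unfolding a_def b_def by auto
    have eqv: "U1 *\<^sub>v a = U2 *\<^sub>v b"
    proof (rule eq_vecI)
      fix r assume "r < dim_vec (U2 *\<^sub>v b)"
      hence r: "r < n" using u2 by simp
      have "0 = (K *\<^sub>v c) $ r" using Kc r by simp
      also have "\<dots> = (\<Sum>col<Suc n. K $$ (r,col) * c $ col)"
        using r c by (simp add: K_def scalar_prod_def lessThan_atLeast0)
      also have "\<dots> = (\<Sum>col\<in>{0..<i}. K $$ (r,col) * c $ col) + (\<Sum>col\<in>{i..<Suc n}. K $$ (r,col) * c $ col)"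
        using i by (simp add: lessThan_atLeast0 sum.atLeastLessThan_concat)
      also have "(\<Sum>col\<in>{0..<i}. K $$ (r,col) * c $ col) = (\<Sum>col<i. U1 $$ (r,col) * c $ col)"
        using r i by (auto simp: K_def lessThan_atLeast0 intro!: sum.cong)
      also have "(\<Sum>col\<in>{i..<Suc n}. K $$ (r,col) * c $ col) = - (\<Sum>col\<in>{i..<Suc n}. U2 $$ (r, col - 1) * c $ (Suc (col - 1)))"
        using r i by (auto simp: K_def sum_negf intro!: sum.cong)
      also have "(\<Sum>col<i. U1 $$ (r,col) * c $ col) = (\<Sum>j<n. if j < i then U1 $$ (r,j) * c $ j else 0)"
        using sum_if_less[OF i(2)] by simp
      also have "\<dots> = (U1 *\<^sub>v a) $ r"
        using r u1 by (auto simp: a_def scalar_prod_def lessThan_atLeast0 intro!: sum.cong)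
      also have "(\<Sum>col\<in>{i..<Suc n}. U2 $$ (r, col - 1) * c $ (Suc (col - 1))) = (\<Sum>j<n. if i - 1 \<le> j then U2 $$ (r,j) * c $ (Suc j) else 0)"
        using sum_if_ge[OF i, of "\<lambda>j. U2 $$ (r,j) * c $ (Suc j)"] by simp
      also have "\<dots> = (U2 *\<^sub>v b) $ r"
        using r u2 by (auto simp: b_def scalar_prod_def lessThan_atLeast0 intro!: sum.cong)
      finally show "(U1 *\<^sub>v a) $ r = (U2 *\<^sub>v b) $ r" by simp
    qed (insert u1 u2, auto)
    define v where "v = U1 *\<^sub>v a"
    have v: "v \<in> carrier_vec n" unfolding v_def using u1 a by simp
    have av: "mat_adjoint U1 *\<^sub>v v = a" unfolding v_def by (rule adjU_U_vec[OF U1 a])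
    have bv: "mat_adjoint U2 *\<^sub>v v = b" unfolding v_def eqv by (rule adjU_U_vec[OF U2 b])
    have v0: "v \<noteq> 0\<^sub>v n"
    proof
      assume "v = 0\<^sub>v n"
      hence a0: "a = 0\<^sub>v n" and b0: "b = 0\<^sub>v n" using av bv u1 u2 by auto
      have "c = 0\<^sub>v (Suc n)"
      proof (rule eq_vecI)
        fix col assume "col < dim_vec (0\<^sub>v (Suc n) :: complex vec)"
        hence col: "col < Suc n" by simp
        show "c $ col = 0\<^sub>v (Suc n) $ col"
        proof (cases "col < i")
          case True
          hence "a $ col = c $ col" using i col by (simp add: a_def)
          thus ?thesis using a0 True i col by simp
        next
          case False
          then obtain j where j: "col = Suc j" using i by (cases col, auto)
          hence "b $ j = c $ col" using False i col by (simp add: b_def)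
          thus ?thesis using b0 j col by simp
        qed
      qed (insert c, auto)
      with c0 show False by simp
    qed
    define N where "N = (\<Sum>j<n. (cmod (v $ j))\<^sup>2)"
    have Na: "(\<Sum>j<n. (cmod (a $ j))\<^sup>2) = N" unfolding N_def v_def by (rule nsq_unitary[OF U1 a, symmetric])
    have Nb: "(\<Sum>j<n. (cmod (b $ j))\<^sup>2) = N" unfolding N_def v_def eqv by (rule nsq_unitary[OF U2 b, symmetric])
    have Npos: "N > 0"
    proof -
      obtain j where j: "j < n" and vj: "v $ j \<noteq> 0" using v0 v by (metis eq_vecI carrier_vecD index_zero_vec)
      have "(cmod (v $ j))\<^sup>2 > 0" using vj by simp
      moreover have "(cmod (v $ j))\<^sup>2 \<le> N" unfolding N_def
        by (rule member_le_sum, insert j, auto)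
      ultimately show ?thesis by linarith
    qed
    have q1: "Re (qf H1 v) = (\<Sum>j<n. d1 j * (cmod (a $ j))\<^sup>2)"
      unfolding H1d qf_udu[OF U1 v] av qf_dg[OF a] by simp
    have q2: "Re (qf H2 v) = (\<Sum>j<n. d2 j * (cmod (b $ j))\<^sup>2)"
      unfolding H2d qf_udu[OF U2 v] bv qf_dg[OF b] by simp
    have "d1 (i - 1) * N = (\<Sum>j<n. d1 (i - 1) * (cmod (a $ j))\<^sup>2)"
      unfolding Na[symmetric] by (simp add: sum_distrib_left)
    also have "\<dots> \<le> (\<Sum>j<n. d1 j * (cmod (a $ j))\<^sup>2)"
    proof (rule sum_mono)
      fix j assume j: "j \<in> {..<n}"
      show "d1 (i - 1) * (cmod (a $ j))\<^sup>2 \<le> d1 j * (cmod (a $ j))\<^sup>2"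
      proof (cases "j < i")
        case True
        hence "d1 j \<ge> d1 (i - 1)" using m1 i j by auto
        thus ?thesis by (intro mult_right_mono, auto)
      next
        case False
        thus ?thesis using j by (simp add: a_def)
      qed
    qed
    also have "\<dots> = Re (qf H1 v)" using q1 by simp
    also have "\<dots> \<le> Re (qf H2 v)" by (rule le[OF v])
    also have "\<dots> \<le> (\<Sum>j<n. d2 (i - 1) * (cmod (b $ j))\<^sup>2)"
      unfolding q2
    proof (rule sum_mono)
      fix j assume j: "j \<in> {..<n}"
      show "d2 j * (cmod (b $ j))\<^sup>2 \<le> d2 (i - 1) * (cmod (b $ j))\<^sup>2"
      proof (cases "i - 1 \<le> j")
        case True
        hence "d2 j \<le> d2 (i - 1)" using m2 i j by auto
        thus ?thesis by (intro mult_right_mono, auto)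
      next
        case False
        thus ?thesis using j by (simp add: b_def)
      qed
    qed
    also have "\<dots> = d2 (i - 1) * N"
      unfolding Nb[symmetric] by (simp add: sum_distrib_left)
    finally have "d1 (i - 1) * N \<le> d2 (i - 1) * N" .
    hence "d1 (i - 1) \<le> d2 (i - 1)" using Npos by simp
    with lt show False by simp
  qed
qed




lemma dg_cong: "(\<And>j. j < n \<Longrightarrow> f j = g j) \<Longrightarrow> dg n f = dg n g"
  by (rule eq_matI, auto simp: dg_def)

lemma dg_mult: "dg n f * dg n g = dg n (\<lambda>j. f j * g j)"
proof (rule eq_matI)
  fix i j assume "i < dim_row (dg n (\<lambda>j. f j * g j))" "j < dim_col (dg n (\<lambda>j. f j * g j))"
  hence i: "i < n" and j: "j < n" by auto
  show "(dg n f * dg n g) $$ (i, j) = dg n (\<lambda>j. f j * g j) $$ (i, j)"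
    using dg_mult_entry[OF dg_carrier i j, of f g] i j by (simp add: dg_def)
qed auto

lemma udu_carrier: "unitary_mat n U \<Longrightarrow> U * dg n f * mat_adjoint U \<in> carrier_mat n n"
  using mult_carrier_mat[OF mult_carrier_mat[OF unitaryD(1) dg_carrier] unitaryD(2)] by blast

lemma udu_herm: assumes U: "unitary_mat n U"
  shows "mat_adjoint (U * dg n f * mat_adjoint U) = U * dg n f * mat_adjoint U"
  using adj_congr_herm[OF unitaryD(2)[OF U] dg_carrier adj_dg] by simp

lemma udu_mult: assumes U: "unitary_mat n U"
  shows "(U * dg n f * mat_adjoint U) * (U * dg n g * mat_adjoint U) = U * dg n (\<lambda>j. f j * g j) * mat_adjoint U"
proof -
  note u = unitaryD[OF U]
  have D1: "dg n f \<in> carrier_mat n n" and D2: "dg n g \<in> carrier_mat n n" by auto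
  have X: "dg n g * mat_adjoint U \<in> carrier_mat n n" using mult_carrier_mat[OF D2 u(2)] .
  have "(U * dg n f * mat_adjoint U) * (U * dg n g * mat_adjoint U)
      = U * (dg n f * (mat_adjoint U * (U * (dg n g * mat_adjoint U))))"
    using assoc_mult_mat[OF mult_carrier_mat[OF u(1) D1] u(2) mult_carrier_mat[OF mult_carrier_mat[OF u(1) D2] u(2)]]
      assoc_mult_mat[OF u(1) D1 mult_carrier_mat[OF u(2) mult_carrier_mat[OF mult_carrier_mat[OF u(1) D2] u(2)]]]
      assoc_mult_mat[OF u(1) D2 u(2)] by simp
  also have "mat_adjoint U * (U * (dg n g * mat_adjoint U)) = dg n g * mat_adjoint U"
    by (rule unitary_cancel(2)[OF U X])
  also have "U * (dg n f * (dg n g * mat_adjoint U)) = U * dg n (\<lambda>j. f j * g j) * mat_adjoint U"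
    using assoc_mult_mat[OF D1 D2 u(2)] assoc_mult_mat[OF u(1) mult_carrier_mat[OF D1 D2] u(2)] dg_mult[of n f g] by simp
  finally show ?thesis .
qed

lemma udu_one: assumes U: "unitary_mat n U" shows "U * dg n (\<lambda>_. 1) * mat_adjoint U = 1\<^sub>m n"
  using unitaryD[OF U] by (simp add: dg_one)

lemma qf_udu_le: assumes U: "unitary_mat n U" and fg: "\<And>j. j < n \<Longrightarrow> f j \<le> g j" and v: "v \<in> carrier_vec n"
  shows "Re (qf (U * dg n f * mat_adjoint U) v) \<le> Re (qf (U * dg n g * mat_adjoint U) v)"
proof -
  have w: "mat_adjoint U *\<^sub>v v \<in> carrier_vec n" using mult_mat_vec_carrier[OF unitaryD(2)[OF U] v] .
  show ?thesis unfolding qf_udu[OF U v] qf_dg[OF w]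
    by (simp, intro sum_mono mult_right_mono, auto simp: fg)
qed

lemma eig_cp: "char_poly X = char_poly Y \<Longrightarrow> eig X i = eig Y i"
  unfolding eig_def eig_list_def by simp

lemma qf_unit: assumes j: "j < n"
  shows "qf (dg n d) (unit_vec n j) = of_real (d j)"
proof -
  have "qf (dg n d) (unit_vec n j) = of_real (\<Sum>k<n. d k * (cmod (unit_vec n j $ k))\<^sup>2)"
    by (rule qf_dg, simp)
  also have "(\<Sum>k<n. d k * (cmod (unit_vec n j $ k))\<^sup>2) = (\<Sum>k<n. if k = j then d j else 0)"
    by (rule sum.cong, auto simp: unit_vec_def)
  also have "\<dots> = d j" using j by simp
  finally show ?thesis .
qed



lemma mat_min1_spec: assumes A: "psd_mat n A"
  shows "\<exists>U a. unitary_mat n U \<and> A = U * dg n a * mat_adjoint U \<and>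
    mat_min1 A = U * dg n (\<lambda>j. min (a j) 1) * mat_adjoint U \<and> (\<forall>j<n. 0 \<le> a j)"
proof -
  have Ac: "A \<in> carrier_mat n n" and hA: "mat_adjoint A = A"
    and pos: "\<And>v. v \<in> carrier_vec n \<Longrightarrow> Re (qf A v) \<ge> 0"
    using A unfolding psd_mat_def hermitian_mat_def qf_def by auto
  have dr: "dim_row A = n" using Ac by simp
  define P where "P = (\<lambda>M. \<exists>U D. unitary_mat (dim_row A) U \<and>
      D \<in> carrier_mat (dim_row A) (dim_row A) \<and> diagonal_mat D \<and>
      (\<forall>i < dim_row A. D $$ (i,i) \<in> \<real>) \<and>
      A = U * D * mat_adjoint U \<and> M = U * diag_min1 D * mat_adjoint U)"
  obtain U0 d0 where U0: "unitary_mat n U0" and A0: "A = U0 * dg n d0 * mat_adjoint U0"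
    using spectral_aux[OF Ac hA] by blast
  have "P (U0 * diag_min1 (dg n d0) * mat_adjoint U0)" unfolding P_def dr
  proof (intro exI conjI)
    show "unitary_mat n U0" by fact
    show "dg n d0 \<in> carrier_mat n n" by simp
    show "diagonal_mat (dg n d0)" by (simp add: diagonal_mat_def dg_def)
    show "\<forall>i<n. dg n d0 $$ (i, i) \<in> \<real>" by (simp add: dg_def)
    show "A = U0 * dg n d0 * mat_adjoint U0" by fact
  qed (rule refl)
  hence "P (mat_min1 A)" unfolding mat_min1_def P_def[symmetric] by (rule someI)
  hence "\<exists>U D. unitary_mat n U \<and> D \<in> carrier_mat n n \<and> diagonal_mat D \<and>
      (\<forall>i < n. D $$ (i,i) \<in> \<real>) \<and>
      A = U * D * mat_adjoint U \<and> mat_min1 A = U * diag_min1 D * mat_adjoint U"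
    unfolding P_def dr .
  then obtain U where "\<exists>D. unitary_mat n U \<and> D \<in> carrier_mat n n \<and> diagonal_mat D \<and>
      (\<forall>i < n. D $$ (i,i) \<in> \<real>) \<and>
      A = U * D * mat_adjoint U \<and> mat_min1 A = U * diag_min1 D * mat_adjoint U" ..
  then obtain D where all: "unitary_mat n U \<and> D \<in> carrier_mat n n \<and> diagonal_mat D \<and>
      (\<forall>i < n. D $$ (i,i) \<in> \<real>) \<and>
      A = U * D * mat_adjoint U \<and> mat_min1 A = U * diag_min1 D * mat_adjoint U" ..
  have U: "unitary_mat n U" using all by (elim conjE)
  have D: "D \<in> carrier_mat n n" using all by (elim conjE)
  have dD: "diagonal_mat D" using all by (elim conjE)
  have rD: "\<forall>i<n. D $$ (i,i) \<in> \<real>" using all by (elim conjE)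
  have AD: "A = U * D * mat_adjoint U" using all by (elim conjE)
  have MD: "mat_min1 A = U * diag_min1 D * mat_adjoint U" using all by (elim conjE)
  define a where "a = (\<lambda>j. Re (D $$ (j,j)))"
  have Da: "D = dg n a"
  proof (rule eq_matI)
    fix i j assume "i < dim_row (dg n a)" "j < dim_col (dg n a)"
    hence i: "i < n" and j: "j < n" by auto
    show "D $$ (i,j) = dg n a $$ (i,j)"
    proof (cases "i = j")
      case True
      thus ?thesis using rD i by (simp add: a_def dg_def)
    next
      case False
      thus ?thesis using dD D i j unfolding diagonal_mat_def by (simp add: dg_def)
    qed
  qed (insert D, auto)
  have Mm: "diag_min1 D = dg n (\<lambda>j. min (a j) 1)"
    unfolding diag_min1_def dg_def a_def using D by (intro eq_matI, auto)
  have MD': "mat_min1 A = U * dg n (\<lambda>j. min (a j) 1) * mat_adjoint U" unfolding MD Mm ..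
  have AD': "A = U * dg n a * mat_adjoint U" using AD unfolding Da .
  have nn: "0 \<le> a j" if j: "j < n" for j
  proof -
    note u = unitaryD[OF U]
    have e: "unit_vec n j \<in> carrier_vec n" by simp
    have Ue: "U *\<^sub>v unit_vec n j \<in> carrier_vec n" by (rule mult_mat_vec_carrier[OF u(1) e])
    have "qf A (U *\<^sub>v unit_vec n j) = qf (U * dg n a * mat_adjoint U) (U *\<^sub>v unit_vec n j)"
      by (subst AD', rule refl)
    also have "\<dots> = qf (dg n a) (mat_adjoint U *\<^sub>v (U *\<^sub>v unit_vec n j))" by (rule qf_udu[OF U Ue])
    also have "mat_adjoint U *\<^sub>v (U *\<^sub>v unit_vec n j) = unit_vec n j" by (rule adjU_U_vec[OF U e])
    also have "qf (dg n a) (unit_vec n j) = of_real (a j)" by (rule qf_unit[OF j])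
    finally have eq: "qf A (U *\<^sub>v unit_vec n j) = of_real (a j)" .
    have "0 \<le> Re (qf A (U *\<^sub>v unit_vec n j))" by (rule pos[OF Ue])
    thus ?thesis unfolding eq by simp
  qed
  show ?thesis
    apply (rule exI[of _ U], rule exI[of _ a])
    apply (intro conjI U allI impI nn)
    by (rule AD', rule MD')
qed



lemma weyl_congr:
  fixes S X Y :: "complex mat"
  assumes S: "S \<in> carrier_mat n n" "mat_adjoint S = S"
    and X: "X \<in> carrier_mat n n" "mat_adjoint X = X"
    and Y: "Y \<in> carrier_mat n n" "mat_adjoint Y = Y"
    and le: "\<And>v. v \<in> carrier_vec n \<Longrightarrow> Re (qf X v) \<le> Re (qf Y v)"
    and i: "1 \<le> i" "i \<le> n"
  shows "eig (S * X * S) i \<le> eig (S * Y * S) i"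
proof -
  have eX: "S * X * S = mat_adjoint S * X * S" using S by simp
  have eY: "S * Y * S = mat_adjoint S * Y * S" using S by simp
  show ?thesis unfolding eX eY
  proof (rule weyl_mono[OF _ _ _ _ _ i])
    show "mat_adjoint S * X * S \<in> carrier_mat n n" using S X by simp
    show "mat_adjoint S * Y * S \<in> carrier_mat n n" using S Y by simp
    show "mat_adjoint (mat_adjoint S * X * S) = mat_adjoint S * X * S" by (rule adj_congr_herm[OF S(1) X])
    show "mat_adjoint (mat_adjoint S * Y * S) = mat_adjoint S * Y * S" by (rule adj_congr_herm[OF S(1) Y])
    fix v :: "complex vec" assume v: "v \<in> carrier_vec n"
    have Sv: "S *\<^sub>v v \<in> carrier_vec n" using S v by simp
    show "Re (qf (mat_adjoint S * X * S) v) \<le> Re (qf (mat_adjoint S * Y * S) v)"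
      unfolding qf_congr[OF S(1) X(1) v] qf_congr[OF S(1) Y(1) v] by (rule le[OF Sv])
  qed
qed

lemma unitary_one: "unitary_mat n (1\<^sub>m n)" unfolding unitary_mat_def by simp

theorem lemma3:
  fixes n :: nat and A B :: "complex mat" and i :: nat
  assumes "psd_mat n A" and "psd_mat n B"
    and "1 \<le> i" and "i \<le> n"
  shows "eig (mat_min1 A * mat_min1 B) i \<le> min (eig (A * B) i) 1"
proof -
  have i: "1 \<le> i" "i \<le> n" using assms by auto
  obtain U a where U: "unitary_mat n U" and AE: "A = U * dg n a * mat_adjoint U"
    and AmE: "mat_min1 A = U * dg n (\<lambda>j. min (a j) 1) * mat_adjoint U" and a0: "\<forall>j<n. 0 \<le> a j"
    using mat_min1_spec[OF assms(1)] by blast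
  obtain V b where V: "unitary_mat n V" and BE: "B = V * dg n b * mat_adjoint V"
    and BmE: "mat_min1 B = V * dg n (\<lambda>j. min (b j) 1) * mat_adjoint V" and b0: "\<forall>j<n. 0 \<le> b j"
    using mat_min1_spec[OF assms(2)] by blast
  define Am where "Am = mat_min1 A"
  define Bm where "Bm = mat_min1 B"
  define R where "R = U * dg n (\<lambda>j. sqrt (a j)) * mat_adjoint U"
  define S where "S = V * dg n (\<lambda>j. sqrt (min (b j) 1)) * mat_adjoint V"
  define I where "I = (1\<^sub>m n :: complex mat)"
  have AmE': "Am = U * dg n (\<lambda>j. min (a j) 1) * mat_adjoint U" unfolding Am_def by (rule AmE)
  have BmE': "Bm = V * dg n (\<lambda>j. min (b j) 1) * mat_adjoint V" unfolding Bm_def by (rule BmE)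
  have Ac: "A \<in> carrier_mat n n" unfolding AE by (rule udu_carrier[OF U])
  have Bc: "B \<in> carrier_mat n n" unfolding BE by (rule udu_carrier[OF V])
  have Amc: "Am \<in> carrier_mat n n" unfolding Am_def AmE by (rule udu_carrier[OF U])
  have Bmc: "Bm \<in> carrier_mat n n" unfolding Bm_def BmE by (rule udu_carrier[OF V])
  have Rc: "R \<in> carrier_mat n n" unfolding R_def by (rule udu_carrier[OF U])
  have Sc: "S \<in> carrier_mat n n" unfolding S_def by (rule udu_carrier[OF V])
  have Ic: "I \<in> carrier_mat n n" unfolding I_def by simp
  have hA: "mat_adjoint A = A" unfolding AE by (rule udu_herm[OF U])
  have hB: "mat_adjoint B = B" unfolding BE by (rule udu_herm[OF V])
  have hAm: "mat_adjoint Am = Am" unfolding Am_def AmE by (rule udu_herm[OF U])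
  have hBm: "mat_adjoint Bm = Bm" unfolding Bm_def BmE by (rule udu_herm[OF V])
  have hR: "mat_adjoint R = R" unfolding R_def by (rule udu_herm[OF U])
  have hS: "mat_adjoint S = S" unfolding S_def by (rule udu_herm[OF V])
  have hI: "mat_adjoint I = I" unfolding I_def by simp
  have IU: "I = U * dg n (\<lambda>_. 1) * mat_adjoint U" unfolding I_def by (rule udu_one[OF U, symmetric])
  have IV: "I = V * dg n (\<lambda>_. 1) * mat_adjoint V" unfolding I_def by (rule udu_one[OF V, symmetric])
  have RR: "R * R = A" unfolding R_def AE udu_mult[OF U]
    by (intro arg_cong2[where f = "\<lambda>x y. x * y"] arg_cong2[where f = "\<lambda>x y. x * y"] refl dg_cong,
        insert a0, simp)
  have SS: "S * S = Bm" unfolding S_def Bm_def BmE udu_mult[OF V]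
    by (intro arg_cong2[where f = "\<lambda>x y. x * y"] arg_cong2[where f = "\<lambda>x y. x * y"] refl dg_cong,
        insert b0, simp)
  have "Am * Bm = (Am * S) * S" unfolding SS[symmetric] by (rule assoc_mult_mat[OF Amc Sc Sc, symmetric])
  hence "char_poly (Am * Bm) = char_poly (S * (Am * S))"
    using char_poly_swap[OF mult_carrier_mat[OF Amc Sc] Sc] by simp
  also have "S * (Am * S) = S * Am * S" by (rule assoc_mult_mat[OF Sc Amc Sc, symmetric])
  finally have c1: "char_poly (Am * Bm) = char_poly (S * Am * S)" .
  have w2: "eig (S * Am * S) i \<le> eig (S * A * S) i"
    by (rule weyl_congr[OF Sc hS Amc hAm Ac hA _ i], unfold AmE' AE, rule qf_udu_le[OF U], auto)
  have "S * A * S = (S * R) * (R * S)" unfolding RR[symmetric]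
    using assoc_mult_mat[OF Sc Rc Rc] assoc_mult_mat[OF Sc mult_carrier_mat[OF Rc Rc] Sc]
      assoc_mult_mat[OF mult_carrier_mat[OF Sc Rc] Rc Sc] by simp
  hence "char_poly (S * A * S) = char_poly ((R * S) * (S * R))"
    using char_poly_swap[OF mult_carrier_mat[OF Sc Rc] mult_carrier_mat[OF Rc Sc]] by simp
  also have "(R * S) * (S * R) = R * Bm * R" unfolding SS[symmetric]
    using assoc_mult_mat[OF Rc Sc Sc] assoc_mult_mat[OF Rc mult_carrier_mat[OF Sc Sc] Rc]
      assoc_mult_mat[OF mult_carrier_mat[OF Rc Sc] Sc Rc] by simp
  finally have c3: "char_poly (S * A * S) = char_poly (R * Bm * R)" .
  have w4: "eig (R * Bm * R) i \<le> eig (R * B * R) i"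
    by (rule weyl_congr[OF Rc hR Bmc hBm Bc hB _ i], unfold BmE' BE, rule qf_udu_le[OF V], auto)
  have "char_poly (R * B * R) = char_poly (R * (R * B))"
    using char_poly_swap[OF mult_carrier_mat[OF Rc Bc] Rc] by simp
  also have "R * (R * B) = A * B" unfolding RR[symmetric] by (rule assoc_mult_mat[OF Rc Rc Bc, symmetric])
  finally have c5: "char_poly (R * B * R) = char_poly (A * B)" .
  have le1: "eig (Am * Bm) i \<le> eig (A * B) i"
    using eig_cp[OF c1, of i] eig_cp[OF c3, of i] eig_cp[OF c5, of i] w2 w4 by simp
  have w6: "eig (S * Am * S) i \<le> eig (S * I * S) i"
    by (rule weyl_congr[OF Sc hS Amc hAm Ic hI _ i], unfold AmE' IU, rule qf_udu_le[OF U], auto)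
  have SIS: "S * I * S = Bm" unfolding I_def SS[symmetric] using Sc by simp
  have w8: "eig Bm i \<le> eig I i"
  proof (rule weyl_mono[OF Bmc hBm Ic hI _ i])
    fix v :: "complex vec" assume v: "v \<in> carrier_vec n"
    show "Re (qf Bm v) \<le> Re (qf I v)" unfolding Bm_def BmE IV by (rule qf_udu_le[OF V _ v], simp)
  qed
  have "eig I i = eig (1\<^sub>m n * dg n (\<lambda>_. 1) * mat_adjoint (1\<^sub>m n)) i"
    unfolding I_def by (simp add: dg_one)
  also have "\<dots> = 1" by (rule eig_udu_sorted[OF unitary_one _ i], simp)
  finally have e9: "eig I i = 1" .
  have le2: "eig (Am * Bm) i \<le> 1"
    using eig_cp[OF c1, of i] w6 SIS w8 e9 by simp
  show ?thesis using le1 le2 unfolding Am_def Bm_def by simp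
qed


end
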